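(* Let $C=C(m,n;k,l;c,d)$ be a $C$-shaped supergrid graph and $s,t$ two distinct vertices of $C$ labeled so that $s_x\leq t_x$. If $C$ has a Hamiltonian path from $s$ to $t$, then $(C,s,t)$ satisfies none of the conditions (F1), (F3), (F7), (F8), (F9), where: (F1) $s$ or $t$ is a cut vertex of $C$, or $\{s,t\}$ is a vertex cut of $C$; (F3) there is a vertex $w\in V(C)$ with $\deg(w)=1$, $w\neq s$, $w\neq t$; (F7) $m=3$, $a=2$, and either ($c=1$ and $\{s,t\}=\{(1,1),(2,2)\}$ or $\{(1,2),(2,1)\}$) or ($d=1$ and $\{s,t\}=\{(1,n),(2,n-1)\}$ or $\{(1,n-1),(2,n)\}$); (F8) $n=3$, $k=c=d=1$, and one of: (1) $a\geq 2$, $s_x=t_x=m-1$, $|s_y-t_y|=2$; (2) $a=2$, $s_x=1$, $t_x=2$, $|s_y-t_y|=2$; (3) $a>2$, $s_x<m-1$, $t=(m-1,2)$; (F9) $a=1$, and ($s_y,t_y\leq c$ or $s_y,t_y>c+l$).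
   Context: The supergrid graph $S^\infty$ has vertex set $\mathbb{Z}^2$, two distinct vertices $u,v$ being adjacent iff $|u_x-v_x|\leq 1$ and $|u_y-v_y|\leq 1$; a supergrid graph is a finite vertex-induced subgraph of $S^\infty$. For integers $m\geq 2$, $n\geq 3$, $k,l,c\geq 1$ with $d=n-l-c\geq 1$ and $a=m-k\geq 1$, $C(m,n;k,l;c,d)$ is the supergrid graph induced by $\{(x,y):1\leq x\leq m,\ 1\leq y\leq n\}\setminus\{(x,y): a+1\leq x\leq m,\ c+1\leq y\leq c+l\}$. A cut vertex $v$: $C-v$ disconnected; a vertex cut $V_1$: $C-V_1$ disconnected. A Hamiltonian path from $s$ to $t$ is a simple path from $s$ to $t$ visiting every vertex exactly once. The paper assumes throughout that the given vertices are named so that $s_x\leq t_x$. *)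

theory Defs
  imports Main
begin

type_synonym vtx = "int \<times> int"

definition sg_adj :: "vtx \<Rightarrow> vtx \<Rightarrow> bool" where
  "sg_adj u v \<longleftrightarrow> u \<noteq> v \<and> \<bar>fst u - fst v\<bar> \<le> 1 \<and> \<bar>snd u - snd v\<bar> \<le> 1"

text \<open>Vertex set of C(m,n;k,l;c,d), with a = m - k.\<close>
definition C_shape :: "int \<Rightarrow> int \<Rightarrow> int \<Rightarrow> int \<Rightarrow> int \<Rightarrow> vtx set" where
  "C_shape m n k l c =
     {(x,y). 1 \<le> x \<and> x \<le> m \<and> 1 \<le> y \<and> y \<le> n}
     - {(x,y). m - k + 1 \<le> x \<and> x \<le> m \<and> c + 1 \<le> y \<and> y \<le> c + l}"

definition sg_connected :: "vtx set \<Rightarrow> bool" where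
  "sg_connected V \<longleftrightarrow>
     (\<forall>u\<in>V. \<forall>v\<in>V. (\<lambda>x y. x \<in> V \<and> y \<in> V \<and> sg_adj x y)\<^sup>*\<^sup>* u v)"

definition cut_vertex :: "vtx set \<Rightarrow> vtx \<Rightarrow> bool" where
  "cut_vertex V v \<longleftrightarrow> v \<in> V \<and> \<not> sg_connected (V - {v})"

definition vertex_cut :: "vtx set \<Rightarrow> vtx set \<Rightarrow> bool" where
  "vertex_cut V W \<longleftrightarrow> W \<subseteq> V \<and> \<not> sg_connected (V - W)"

definition sg_degree :: "vtx set \<Rightarrow> vtx \<Rightarrow> nat" where
  "sg_degree V w = card {u \<in> V. sg_adj w u}"

definition ham_path :: "vtx set \<Rightarrow> vtx \<Rightarrow> vtx \<Rightarrow> bool" where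
  "ham_path V s t \<longleftrightarrow> (\<exists>ps. ps \<noteq> [] \<and> distinct ps \<and> set ps = V \<and>
      hd ps = s \<and> last ps = t \<and>
      (\<forall>i. Suc i < length ps \<longrightarrow> sg_adj (ps ! i) (ps ! Suc i)))"

end

theory Submission
  imports Defs
begin

lemma sg_adj_sym: "sg_adj u v \<Longrightarrow> sg_adj v u"
  by (auto simp: sg_adj_def abs_minus_commute)

definition chain :: "vtx list \<Rightarrow> bool" where
  "chain xs \<longleftrightarrow> (\<forall>i. Suc i < length xs \<longrightarrow> sg_adj (xs ! i) (xs ! Suc i))"

lemma chain_tl: "chain xs \<Longrightarrow> chain (tl xs)"
  unfolding chain_def by (cases xs) auto

lemma chain_butlast: "chain xs \<Longrightarrow> chain (butlast xs)"
  unfolding chain_def by (auto simp: nth_butlast)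

lemma chain_conn_aux:
  assumes "chain xs" "i \<le> j" "j < length xs"
  shows "(\<lambda>x y. x \<in> set xs \<and> y \<in> set xs \<and> sg_adj x y)\<^sup>*\<^sup>* (xs!i) (xs!j) \<and>
         (\<lambda>x y. x \<in> set xs \<and> y \<in> set xs \<and> sg_adj x y)\<^sup>*\<^sup>* (xs!j) (xs!i)"
  using assms(2,3)
proof (induction j)
  case 0 then show ?case by simp
next
  case (Suc j)
  show ?case
  proof (cases "i = Suc j")
    case True then show ?thesis by simp
  next
    case False
    then have ij: "i \<le> j" using Suc by simp
    note IH = Suc.IH[OF ij Suc.prems(2)[THEN Suc_lessD]]
    have a: "sg_adj (xs!j) (xs!Suc j)" using assms(1) Suc unfolding chain_def by simp
    have m: "xs!j \<in> set xs" "xs!Suc j \<in> set xs" using Suc by auto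
    have r1: "(\<lambda>x y. x \<in> set xs \<and> y \<in> set xs \<and> sg_adj x y) (xs!j) (xs!Suc j)"
      using a m by simp
    have r2: "(\<lambda>x y. x \<in> set xs \<and> y \<in> set xs \<and> sg_adj x y) (xs!Suc j) (xs!j)"
      using a m sg_adj_sym by simp
    show ?thesis
      using rtranclp.rtrancl_into_rtrancl[OF conjunct1[OF IH] r1]
        converse_rtranclp_into_rtranclp[OF r2 conjunct2[OF IH]] by blast
  qed
qed

lemma chain_conn: "chain xs \<Longrightarrow> sg_connected (set xs)"
  unfolding sg_connected_def
proof (intro ballI)
  fix u v assume c: "chain xs" and u: "u \<in> set xs" and v: "v \<in> set xs"
  obtain i where i: "i < length xs" "xs!i = u" using u by (auto simp: in_set_conv_nth)
  obtain j where j: "j < length xs" "xs!j = v" using v by (auto simp: in_set_conv_nth)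
  show "(\<lambda>x y. x \<in> set xs \<and> y \<in> set xs \<and> sg_adj x y)\<^sup>*\<^sup>* u v"
  proof (cases "i \<le> j")
    case True then show ?thesis using chain_conn_aux[OF c True j(1)] i j by simp
  next
    case False then show ?thesis using chain_conn_aux[OF c _ i(1), of j] i j by simp
  qed
qed

locale hp =
  fixes V :: "vtx set" and s t :: vtx and ps :: "vtx list"
  assumes ne: "ps \<noteq> []" and dist: "distinct ps" and setV: "set ps = V"
    and hd: "hd ps = s" and lst: "last ps = t"
    and adj: "\<forall>i. Suc i < length ps \<longrightarrow> sg_adj (ps ! i) (ps ! Suc i)"
begin

definition pos where "pos v = (THE i. i < length ps \<and> ps!i = v)"

lemma pos_nth: "i < length ps \<Longrightarrow> pos (ps!i) = i"
  unfolding pos_def using dist by (auto intro!: the_equality simp: nth_eq_iff_index_eq)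

lemma pos_props: assumes "v \<in> V" shows "pos v < length ps" "ps ! pos v = v"
proof -
  obtain i where "i < length ps" "ps!i = v" using assms setV by (auto simp: in_set_conv_nth)
  then show "pos v < length ps" "ps ! pos v = v" using pos_nth by auto
qed

lemma pos_eq_iff: "u \<in> V \<Longrightarrow> v \<in> V \<Longrightarrow> pos u = pos v \<longleftrightarrow> u = v"
  using pos_props by metis

lemma s_in: "s \<in> V" using ne hd setV by auto
lemma t_in: "t \<in> V" using ne lst setV by auto
lemma pos_s: "pos s = 0" using ne hd pos_nth[of 0] by (simp add: hd_conv_nth)
lemma pos_t: "pos t = length ps - 1" using ne lst pos_nth[of "length ps - 1"] by (simp add: last_conv_nth)
lemma finV: "finite V" using setV by auto
lemma cardV: "length ps = card V" using dist setV distinct_card by metis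

lemma interiorN:
  assumes "v \<in> V" "v \<noteq> s" "v \<noteq> t" "\<forall>u\<in>V. sg_adj v u \<longrightarrow> u \<in> N"
  shows "\<exists>u1\<in>N. \<exists>u2\<in>N. u1 \<in> V \<and> u2 \<in> V \<and> u1 \<noteq> u2 \<and> pos u1 + 1 = pos v \<and> pos u2 = pos v + 1"
proof -
  have p0: "pos v \<noteq> 0" using assms pos_s pos_eq_iff s_in by metis
  have p1: "pos v \<noteq> length ps - 1" using assms pos_t pos_eq_iff t_in by metis
  have lt: "pos v < length ps" using pos_props assms by auto
  define i where "i = pos v - 1"
  have iv: "Suc i = pos v" using p0 i_def by simp
  have a1: "sg_adj (ps!i) v" using adj iv lt pos_props(2)[OF assms(1)] by metis
  have a2: "sg_adj v (ps!Suc (pos v))" using adj lt p1 pos_props(2)[OF assms(1)]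
    by (metis Suc_lessI diff_Suc_1)
  have l2: "Suc (pos v) < length ps" using lt p1 by linarith
  have m1: "ps!i \<in> V" using setV iv lt by auto
  have m2: "ps!Suc (pos v) \<in> V" using setV l2 by auto
  have q1: "pos (ps!i) + 1 = pos v" using pos_nth iv lt by auto
  have q2: "pos (ps!Suc (pos v)) = pos v + 1" using pos_nth l2 by auto
  show ?thesis
    apply (rule bexI[of _ "ps!i"], rule bexI[of _ "ps!Suc (pos v)"])
    using assms(4) a1 a2 m1 m2 q1 q2 sg_adj_sym by auto
qed

lemma startN:
  assumes "2 \<le> length ps" "\<forall>u\<in>V. sg_adj s u \<longrightarrow> u \<in> N"
  shows "\<exists>u\<in>N. u \<in> V \<and> pos u = 1"
proof -
  have "sg_adj (ps!0) (ps!1)" using adj assms by auto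
  moreover have "ps!0 = s" using ne hd by (simp add: hd_conv_nth)
  moreover have "ps!1 \<in> V" using setV assms by auto
  moreover have "pos (ps!1) = 1" using pos_nth assms by auto
  ultimately show ?thesis using assms by auto
qed

lemma crossing:
  fixes P :: "nat \<Rightarrow> bool"
  assumes "\<not> P 0" "P j"
  shows "\<exists>f. 0 < f \<and> f \<le> j \<and> \<not> P (f - 1) \<and> P f"
  using assms(2)
proof (induction j)
  case 0 then show ?case using assms by simp
next
  case (Suc j)
  show ?case
  proof (cases "P j")
    case True then show ?thesis using Suc.IH by (meson le_SucI)
  next
    case False then show ?thesis using Suc.prems by (intro exI[of _ "Suc j"]) auto
  qed
qed

end


lemma (in hp) F8c:
  assumes V: "V = C_shape m 3 1 1 1" and a: "m - 1 > 2" and s: "fst s < m - 1" and t: "t = (m-1,2)"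
  shows False
proof -
  have N1: "\<forall>u\<in>V. sg_adj (m,1) u \<longrightarrow> u \<in> {(m-1,1),(m-1,2)}"
    using a by (auto simp: V C_shape_def sg_adj_def abs_le_iff)
  have N3: "\<forall>u\<in>V. sg_adj (m,3) u \<longrightarrow> u \<in> {(m-1,3),(m-1,2)}"
    using a by (auto simp: V C_shape_def sg_adj_def abs_le_iff)
  have v1: "(m,1) \<in> V" "(m,3) \<in> V" using a by (auto simp: V C_shape_def)
  have ne: "(m,1) \<noteq> s" "(m,3) \<noteq> s" "(m,1) \<noteq> t" "(m,3) \<noteq> t" using s t by auto
  obtain u1 u2 where u: "u1 \<in> {(m-1,1),(m-1,2)}" "u2 \<in> {(m-1,1),(m-1,2)}" "u1 \<in> V" "u2 \<in> V" "u1 \<noteq> u2"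
    "pos u1 + 1 = pos (m,1)" "pos u2 = pos (m,1) + 1"
    using interiorN[OF v1(1) ne(1) ne(3) N1] by blast
  obtain w1 w2 where w: "w1 \<in> {(m-1,3),(m-1,2)}" "w2 \<in> {(m-1,3),(m-1,2)}" "w1 \<in> V" "w2 \<in> V" "w1 \<noteq> w2"
    "pos w1 + 1 = pos (m,3)" "pos w2 = pos (m,3) + 1"
    using interiorN[OF v1(2) ne(2) ne(4) N3] by blast
  have pt: "pos t = length ps - 1" "pos (m,1) < length ps" "pos (m,3) < length ps"
    using pos_t pos_props v1 by auto
  have d: "pos (m,1) \<noteq> pos (m,3)" using pos_eq_iff v1 by auto
  show False using u w pt d t by auto
qed


context hp begin

lemma sep:
  assumes cr: "\<forall>x\<in>V. \<forall>y\<in>V. sg_adj x y \<longrightarrow> \<not> P x \<longrightarrow> P y \<longrightarrow> y = w"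
    and ns: "\<not> P s" and nt: "\<not> P t" and u: "u \<in> V" "P u" "u \<noteq> w"
  shows False
proof -
  let ?L = "length ps"
  have s0: "ps!0 = s" using ne hd by (simp add: hd_conv_nth)
  have tL: "ps!(?L - 1) = t" using ne lst by (simp add: last_conv_nth)
  have pu: "pos u < ?L" "ps!(pos u) = u" using pos_props u by auto
  obtain f where f: "0 < f" "f \<le> pos u" "\<not> P (ps!(f-1))" "P (ps!f)"
    using crossing[of "\<lambda>i. P (ps!i)" "pos u"] ns s0 pu u by auto
  have fL: "f < ?L" using f pu by linarith
  have "sg_adj (ps!(f-1)) (ps!f)" using adj fL f(1) by (metis Suc_pred' less_imp_diff_less)
  moreover have "ps!(f-1) \<in> V" "ps!f \<in> V" using setV fL by auto
  ultimately have fw: "ps!f = w" using cr f by blast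
  obtain g where g: "0 < g" "g \<le> ?L - 1 - pos u" "\<not> P (ps!(?L - 1 - (g-1)))" "P (ps!(?L - 1 - g))"
    using crossing[of "\<lambda>i. P (ps!(?L - 1 - i))" "?L - 1 - pos u"] nt tL pu u
    by (auto simp: diff_diff_cancel)
  have gi: "Suc (?L - 1 - g) = ?L - 1 - (g - 1)" "?L - 1 - (g-1) < ?L" using g pu by auto
  have "sg_adj (ps!(?L - 1 - g)) (ps!(?L - 1 - (g-1)))" using adj gi by metis
  moreover have "ps!(?L - 1 - g) \<in> V" "ps!(?L - 1 - (g-1)) \<in> V" using setV gi by auto
  ultimately have gw: "ps!(?L - 1 - g) = w" using cr g sg_adj_sym by blast
  have "?L - 1 - g < ?L" using gi by linarith
  then have "f = ?L - 1 - g" using fw gw nth_eq_iff_index_eq[OF dist fL] by metis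
  then have "f = pos u" using f g by linarith
  then show False using fw pu u by simp
qed

lemma F9lo:
  assumes V: "V = C_shape m n (m - 1) l c" and c: "c \<ge> 1" "l \<ge> 1" "n - l - c \<ge> 1" "m \<ge> 2"
    and st: "snd s \<le> c" "snd t \<le> c"
  shows False
proof (rule sep[of "\<lambda>x. snd x > c" "(1, c+1)" "(1,n)"])
  show "\<forall>x\<in>V. \<forall>y\<in>V. sg_adj x y \<longrightarrow> \<not> snd x > c \<longrightarrow> snd y > c \<longrightarrow> y = (1, c+1)"
    using c by (auto simp: V C_shape_def sg_adj_def abs_le_iff)
qed (use st c in \<open>auto simp: V C_shape_def\<close>)

lemma F9hi:
  assumes V: "V = C_shape m n (m - 1) l c" and c: "c \<ge> 1" "l \<ge> 1" "n - l - c \<ge> 1" "m \<ge> 2"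
    and st: "snd s > c + l" "snd t > c + l"
  shows False
proof (rule sep[of "\<lambda>x. snd x \<le> c + l" "(1, c+l)" "(1,1)"])
  show "\<forall>x\<in>V. \<forall>y\<in>V. sg_adj x y \<longrightarrow> \<not> snd x \<le> c + l \<longrightarrow> snd y \<le> c + l \<longrightarrow> y = (1, c+l)"
    using c by (auto simp: V C_shape_def sg_adj_def abs_le_iff)
qed (use st c in \<open>auto simp: V C_shape_def\<close>)

end

context hp begin

lemma F7A:
  assumes V: "V = C_shape 3 n 1 l 1" and prm: "l \<ge> 1" "n - l - 1 \<ge> 1" and s: "s = (1,1)" and t: "t = (2,2)"
  shows False
proof -
  have mem: "(1,1) \<in> V" "(1,2) \<in> V" "(1,3) \<in> V" "(2,1) \<in> V" "(2,2) \<in> V" "(2,3) \<in> V" "(3,1) \<in> V" using prm by (auto simp: V C_shape_def)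
  have dst: "pos (1,1) \<noteq> pos (1,2)" "pos (1,1) \<noteq> pos (1,3)" "pos (1,1) \<noteq> pos (2,1)" "pos (1,1) \<noteq> pos (2,2)" "pos (1,1) \<noteq> pos (2,3)" "pos (1,1) \<noteq> pos (3,1)" "pos (1,2) \<noteq> pos (1,3)" "pos (1,2) \<noteq> pos (2,1)" "pos (1,2) \<noteq> pos (2,2)" "pos (1,2) \<noteq> pos (2,3)" "pos (1,2) \<noteq> pos (3,1)" "pos (1,3) \<noteq> pos (2,1)" "pos (1,3) \<noteq> pos (2,2)" "pos (1,3) \<noteq> pos (2,3)" "pos (1,3) \<noteq> pos (3,1)" "pos (2,1) \<noteq> pos (2,2)" "pos (2,1) \<noteq> pos (2,3)" "pos (2,1) \<noteq> pos (3,1)" "pos (2,2) \<noteq> pos (2,3)" "pos (2,2) \<noteq> pos (3,1)" "pos (2,3) \<noteq> pos (3,1)" using mem prm by (simp_all add: pos_eq_iff)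
  have lt: "pos (1,1) < length ps" "pos (1,2) < length ps" "pos (1,3) < length ps" "pos (2,1) < length ps" "pos (2,2) < length ps" "pos (2,3) < length ps" "pos (3,1) < length ps" using mem pos_props by auto
  have ps0: "pos (1,1) = 0" using pos_s s by simp
  have psL: "pos (2,2) + 1 = length ps" using pos_t t ne by simp
  have S: "{(1,1),(1,2),(1,3),(2,1),(2,2),(2,3),(3,1)} \<subseteq> V" using mem by auto
  have cS: "card ({(1,1),(1,2),(1,3),(2,1),(2,2),(2,3),(3,1)} :: vtx set) = 7" using prm by simp
  have cL: "length ps \<ge> 7" using card_mono[OF finV S] cS cardV by simp
  have N0: "\<forall>u\<in>V. sg_adj (3,1) u \<longrightarrow> u \<in> {(2,1),(2,2)}" using prm by (auto simp: V C_shape_def sg_adj_def abs_le_iff)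
  have mv0: "(3,1) \<in> V" using prm by (simp add: V C_shape_def)
  have nes0: "(3,1) \<noteq> s" and net0: "(3,1) \<noteq> t" using prm s t by simp_all
  obtain a0 b0 where I0: "a0 \<in> {(2,1),(2,2)}" "b0 \<in> {(2,1),(2,2)}" "a0 \<noteq> b0" "pos a0 + 1 = pos (3,1)" "pos b0 = pos (3,1) + 1"
    using interiorN[OF mv0 nes0 net0 N0] by blast
  have D0: "(pos (2,1) + 1 = pos (3,1) \<and> pos (2,2) = pos (3,1) + 1) \<or> (pos (2,2) + 1 = pos (3,1) \<and> pos (2,1) = pos (3,1) + 1)" using I0 by auto
  have N1: "\<forall>u\<in>V. sg_adj (2,1) u \<longrightarrow> u \<in> {(1,1),(1,2),(3,1),(2,2)}" using prm by (auto simp: V C_shape_def sg_adj_def abs_le_iff)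
  have mv1: "(2,1) \<in> V" using prm by (simp add: V C_shape_def)
  have nes1: "(2,1) \<noteq> s" and net1: "(2,1) \<noteq> t" using prm s t by simp_all
  obtain a1 b1 where I1: "a1 \<in> {(1,1),(1,2),(3,1),(2,2)}" "b1 \<in> {(1,1),(1,2),(3,1),(2,2)}" "a1 \<noteq> b1" "pos a1 + 1 = pos (2,1)" "pos b1 = pos (2,1) + 1"
    using interiorN[OF mv1 nes1 net1 N1] by blast
  have D1: "(pos (1,1) + 1 = pos (2,1) \<and> pos (1,2) = pos (2,1) + 1) \<or> (pos (1,1) + 1 = pos (2,1) \<and> pos (3,1) = pos (2,1) + 1) \<or> (pos (1,1) + 1 = pos (2,1) \<and> pos (2,2) = pos (2,1) + 1) \<or> (pos (1,2) + 1 = pos (2,1) \<and> pos (1,1) = pos (2,1) + 1) \<or> (pos (1,2) + 1 = pos (2,1) \<and> pos (3,1) = pos (2,1) + 1) \<or> (pos (1,2) + 1 = pos (2,1) \<and> pos (2,2) = pos (2,1) + 1) \<or> (pos (3,1) + 1 = pos (2,1) \<and> pos (1,1) = pos (2,1) + 1) \<or> (pos (3,1) + 1 = pos (2,1) \<and> pos (1,2) = pos (2,1) + 1) \<or> (pos (3,1) + 1 = pos (2,1) \<and> pos (2,2) = pos (2,1) + 1) \<or> (pos (2,2) + 1 = pos (2,1) \<and> pos (1,1) = pos (2,1) + 1) \<or> (pos (2,2) + 1 = pos (2,1) \<and> pos (1,2) = pos (2,1) + 1) \<or> (pos (2,2) + 1 = pos (2,1) \<and> pos (3,1) = pos (2,1)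 + 1)" using I1 by auto
  have NS: "\<forall>u\<in>V. sg_adj s u \<longrightarrow> u \<in> {(1,2),(2,1),(2,2)}" using prm s by (auto simp: V C_shape_def sg_adj_def abs_le_iff)
  obtain z where Z: "z \<in> {(1,2),(2,1),(2,2)}" "pos z = 1" using startN[OF _ NS] cL by auto
  have D2: "pos (1,2) = 1 \<or> pos (2,1) = 1 \<or> pos (2,2) = 1" using Z by auto
  from D0 show False
  proof (elim disjE conjE)
    assume h0: "pos (2,1) + 1 = pos (3,1)" "pos (2,2) = pos (3,1) + 1"
    from D1 show False
    proof (elim disjE conjE)
      assume h1: "pos (1,1) + 1 = pos (2,1)" "pos (1,2) = pos (2,1) + 1"
      show False using h0 h1 lt ps0 psL cL by linarith
    next
      assume h1: "pos (1,1) + 1 = pos (2,1)" "pos (3,1) = pos (2,1) + 1"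
      show False using h0 h1 lt ps0 psL cL by linarith
    next
      assume h1: "pos (1,1) + 1 = pos (2,1)" "pos (2,2) = pos (2,1) + 1"
      show False using h0 h1 lt ps0 psL cL by linarith
    next
      assume h1: "pos (1,2) + 1 = pos (2,1)" "pos (1,1) = pos (2,1) + 1"
      show False using h0 h1 lt ps0 psL cL by linarith
    next
      assume h1: "pos (1,2) + 1 = pos (2,1)" "pos (3,1) = pos (2,1) + 1"
      from D2 show False
      proof (elim disjE conjE)
        assume h2: "pos (1,2) = 1"
        show False using h0 h1 h2 lt ps0 psL cL by linarith
      next
        assume h2: "pos (2,1) = 1"
        show False using h0 h1 h2 lt ps0 psL cL by linarith
      next
        assume h2: "pos (2,2) = 1"
        show False using h0 h1 h2 lt ps0 psL cL by linarith
      qed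
    next
      assume h1: "pos (1,2) + 1 = pos (2,1)" "pos (2,2) = pos (2,1) + 1"
      show False using h0 h1 lt ps0 psL cL by linarith
    next
      assume h1: "pos (3,1) + 1 = pos (2,1)" "pos (1,1) = pos (2,1) + 1"
      show False using h0 h1 lt ps0 psL cL by linarith
    next
      assume h1: "pos (3,1) + 1 = pos (2,1)" "pos (1,2) = pos (2,1) + 1"
      show False using h0 h1 lt ps0 psL cL by linarith
    next
      assume h1: "pos (3,1) + 1 = pos (2,1)" "pos (2,2) = pos (2,1) + 1"
      show False using h0 h1 lt ps0 psL cL by linarith
    next
      assume h1: "pos (2,2) + 1 = pos (2,1)" "pos (1,1) = pos (2,1) + 1"
      show False using h0 h1 lt ps0 psL cL by linarith
    next
      assume h1: "pos (2,2) + 1 = pos (2,1)" "pos (1,2) = pos (2,1) + 1"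
      show False using h0 h1 lt ps0 psL cL by linarith
    next
      assume h1: "pos (2,2) + 1 = pos (2,1)" "pos (3,1) = pos (2,1) + 1"
      show False using h0 h1 lt ps0 psL cL by linarith
    qed
  next
    assume h0: "pos (2,2) + 1 = pos (3,1)" "pos (2,1) = pos (3,1) + 1"
    show False using h0 lt ps0 psL cL by linarith
  qed
qed

lemma F7B:
  assumes V: "V = C_shape 3 n 1 l 1" and prm: "l \<ge> 1" "n - l - 1 \<ge> 1" and s: "s = (1,2)" and t: "t = (2,1)"
  shows False
proof -
  have mem: "(1,1) \<in> V" "(1,2) \<in> V" "(1,3) \<in> V" "(2,1) \<in> V" "(2,2) \<in> V" "(2,3) \<in> V" "(3,1) \<in> V" using prm by (auto simp: V C_shape_def)
  have dst: "pos (1,1) \<noteq> pos (1,2)" "pos (1,1) \<noteq> pos (1,3)" "pos (1,1) \<noteq> pos (2,1)" "pos (1,1) \<noteq> pos (2,2)" "pos (1,1) \<noteq> pos (2,3)" "pos (1,1) \<noteq> pos (3,1)" "pos (1,2) \<noteq> pos (1,3)" "pos (1,2) \<noteq> pos (2,1)" "pos (1,2) \<noteq> pos (2,2)" "pos (1,2) \<noteq> pos (2,3)" "pos (1,2) \<noteq> pos (3,1)" "pos (1,3) \<noteq> pos (2,1)" "pos (1,3) \<noteq> pos (2,2)" "pos (1,3) \<noteq> pos (2,3)" "pos (1,3) \<noteq> pos (3,1)" "pos (2,1) \<noteq> pos (2,2)" "pos (2,1) \<noteq> pos (2,3)" "pos (2,1) \<noteq> pos (3,1)" "pos (2,2) \<noteq>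 pos (2,3)" "pos (2,2) \<noteq> pos (3,1)" "pos (2,3) \<noteq> pos (3,1)" using mem prm by (simp_all add: pos_eq_iff)
  have lt: "pos (1,1) < length ps" "pos (1,2) < length ps" "pos (1,3) < length ps" "pos (2,1) < length ps" "pos (2,2) < length ps" "pos (2,3) < length ps" "pos (3,1) < length ps" using mem pos_props by auto
  have ps0: "pos (1,2) = 0" using pos_s s by simp
  have psL: "pos (2,1) + 1 = length ps" using pos_t t ne by simp
  have S: "{(1,1),(1,2),(1,3),(2,1),(2,2),(2,3),(3,1)} \<subseteq> V" using mem by auto
  have cS: "card ({(1,1),(1,2),(1,3),(2,1),(2,2),(2,3),(3,1)} :: vtx set) = 7" using prm by simp
  have cL: "length ps \<ge> 7" using card_mono[OF finV S] cS cardV by simp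
  have N0: "\<forall>u\<in>V. sg_adj (3,1) u \<longrightarrow> u \<in> {(2,1),(2,2)}" using prm by (auto simp: V C_shape_def sg_adj_def abs_le_iff)
  have mv0: "(3,1) \<in> V" using prm by (simp add: V C_shape_def)
  have nes0: "(3,1) \<noteq> s" and net0: "(3,1) \<noteq> t" using prm s t by simp_all
  obtain a0 b0 where I0: "a0 \<in> {(2,1),(2,2)}" "b0 \<in> {(2,1),(2,2)}" "a0 \<noteq> b0" "pos a0 + 1 = pos (3,1)" "pos b0 = pos (3,1) + 1"
    using interiorN[OF mv0 nes0 net0 N0] by blast
  have D0: "(pos (2,1) + 1 = pos (3,1) \<and> pos (2,2) = pos (3,1) + 1) \<or> (pos (2,2) + 1 = pos (3,1) \<and> pos (2,1) = pos (3,1) + 1)" using I0 by auto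
  have N1: "\<forall>u\<in>V. sg_adj (1,1) u \<longrightarrow> u \<in> {(1,2),(2,1),(2,2)}" using prm by (auto simp: V C_shape_def sg_adj_def abs_le_iff)
  have mv1: "(1,1) \<in> V" using prm by (simp add: V C_shape_def)
  have nes1: "(1,1) \<noteq> s" and net1: "(1,1) \<noteq> t" using prm s t by simp_all
  obtain a1 b1 where I1: "a1 \<in> {(1,2),(2,1),(2,2)}" "b1 \<in> {(1,2),(2,1),(2,2)}" "a1 \<noteq> b1" "pos a1 + 1 = pos (1,1)" "pos b1 = pos (1,1) + 1"
    using interiorN[OF mv1 nes1 net1 N1] by blast
  have D1: "(pos (1,2) + 1 = pos (1,1) \<and> pos (2,1) = pos (1,1) + 1) \<or> (pos (1,2) + 1 = pos (1,1) \<and> pos (2,2) = pos (1,1) + 1) \<or> (pos (2,1) + 1 = pos (1,1) \<and> pos (1,2) = pos (1,1) + 1) \<or> (pos (2,1) + 1 = pos (1,1) \<and> pos (2,2) = pos (1,1) + 1) \<or> (pos (2,2) + 1 = pos (1,1) \<and> pos (1,2) = pos (1,1) + 1) \<or> (pos (2,2) + 1 = pos (1,1) \<and> pos (2,1) = pos (1,1) + 1)" using I1 by auto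
  from D0 show False
  proof (elim disjE conjE)
    assume h0: "pos (2,1) + 1 = pos (3,1)" "pos (2,2) = pos (3,1) + 1"
    show False using h0 lt ps0 psL cL by linarith
  next
    assume h0: "pos (2,2) + 1 = pos (3,1)" "pos (2,1) = pos (3,1) + 1"
    from D1 show False
    proof (elim disjE conjE)
      assume h1: "pos (1,2) + 1 = pos (1,1)" "pos (2,1) = pos (1,1) + 1"
      show False using h0 h1 lt ps0 psL cL by linarith
    next
      assume h1: "pos (1,2) + 1 = pos (1,1)" "pos (2,2) = pos (1,1) + 1"
      show False using h0 h1 lt ps0 psL cL by linarith
    next
      assume h1: "pos (2,1) + 1 = pos (1,1)" "pos (1,2) = pos (1,1) + 1"
      show False using h0 h1 lt ps0 psL cL by linarith
    next
      assume h1: "pos (2,1) + 1 = pos (1,1)" "pos (2,2) = pos (1,1) + 1"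
      show False using h0 h1 lt ps0 psL cL by linarith
    next
      assume h1: "pos (2,2) + 1 = pos (1,1)" "pos (1,2) = pos (1,1) + 1"
      show False using h0 h1 lt ps0 psL cL by linarith
    next
      assume h1: "pos (2,2) + 1 = pos (1,1)" "pos (2,1) = pos (1,1) + 1"
      have "pos (1,1) = pos (3,1)" using h0 h1 lt ps0 psL cL by linarith
      then show False using dst by simp
    qed
  qed
qed

lemma F7C:
  assumes V: "V = C_shape 3 n 1 l c" and prm: "l \<ge> 1" "c \<ge> 1" "n - l - c = 1" and s: "s = (1,n)" and t: "t = (2,n-1)"
  shows False
proof -
  have mem: "(1,n) \<in> V" "(1,n-1) \<in> V" "(1,n-2) \<in> V" "(2,n) \<in> V" "(2,n-1) \<in> V" "(2,n-2) \<in> V" "(3,n) \<in> V" using prm by (auto simp: V C_shape_def)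
  have dst: "pos (1,n) \<noteq> pos (1,n-1)" "pos (1,n) \<noteq> pos (1,n-2)" "pos (1,n) \<noteq> pos (2,n)" "pos (1,n) \<noteq> pos (2,n-1)" "pos (1,n) \<noteq> pos (2,n-2)" "pos (1,n) \<noteq> pos (3,n)" "pos (1,n-1) \<noteq> pos (1,n-2)" "pos (1,n-1) \<noteq> pos (2,n)" "pos (1,n-1) \<noteq> pos (2,n-1)" "pos (1,n-1) \<noteq> pos (2,n-2)" "pos (1,n-1) \<noteq> pos (3,n)" "pos (1,n-2) \<noteq> pos (2,n)" "pos (1,n-2) \<noteq> pos (2,n-1)" "pos (1,n-2) \<noteq> pos (2,n-2)" "pos (1,n-2) \<noteq> pos (3,n)" "pos (2,n) \<noteq> pos (2,n-1)" "pos (2,n) \<noteq> pos (2,n-2)" "pos (2,n) \<noteq> pos (3,n)" "pos (2,n-1) \<noteq> pos (2,n-2)" "pos (2,n-1) \<noteq> pos (3,n)" "pos (2,n-2) \<noteq> pos (3,n)" using mem prm by (simp_all add: pos_eq_iff)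
  have lt: "pos (1,n) < length ps" "pos (1,n-1) < length ps" "pos (1,n-2) < length ps" "pos (2,n) < length ps" "pos (2,n-1) < length ps" "pos (2,n-2) < length ps" "pos (3,n) < length ps" using mem pos_props by auto
  have ps0: "pos (1,n) = 0" using pos_s s by simp
  have psL: "pos (2,n-1) + 1 = length ps" using pos_t t ne by simp
  have S: "{(1,n),(1,n-1),(1,n-2),(2,n),(2,n-1),(2,n-2),(3,n)} \<subseteq> V" using mem by auto
  have cS: "card ({(1,n),(1,n-1),(1,n-2),(2,n),(2,n-1),(2,n-2),(3,n)} :: vtx set) = 7" using prm by simp
  have cL: "length ps \<ge> 7" using card_mono[OF finV S] cS cardV by simp
  have N0: "\<forall>u\<in>V. sg_adj (3,n) u \<longrightarrow> u \<in> {(2,n),(2,n-1)}" using prm by (auto simp: V C_shape_def sg_adj_def abs_le_iff)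
  have mv0: "(3,n) \<in> V" using prm by (simp add: V C_shape_def)
  have nes0: "(3,n) \<noteq> s" and net0: "(3,n) \<noteq> t" using prm s t by simp_all
  obtain a0 b0 where I0: "a0 \<in> {(2,n),(2,n-1)}" "b0 \<in> {(2,n),(2,n-1)}" "a0 \<noteq> b0" "pos a0 + 1 = pos (3,n)" "pos b0 = pos (3,n) + 1"
    using interiorN[OF mv0 nes0 net0 N0] by blast
  have D0: "(pos (2,n) + 1 = pos (3,n) \<and> pos (2,n-1) = pos (3,n) + 1) \<or> (pos (2,n-1) + 1 = pos (3,n) \<and> pos (2,n) = pos (3,n) + 1)" using I0 by auto
  have N1: "\<forall>u\<in>V. sg_adj (2,n) u \<longrightarrow> u \<in> {(1,n),(1,n-1),(3,n),(2,n-1)}" using prm by (auto simp: V C_shape_def sg_adj_def abs_le_iff)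
  have mv1: "(2,n) \<in> V" using prm by (simp add: V C_shape_def)
  have nes1: "(2,n) \<noteq> s" and net1: "(2,n) \<noteq> t" using prm s t by simp_all
  obtain a1 b1 where I1: "a1 \<in> {(1,n),(1,n-1),(3,n),(2,n-1)}" "b1 \<in> {(1,n),(1,n-1),(3,n),(2,n-1)}" "a1 \<noteq> b1" "pos a1 + 1 = pos (2,n)" "pos b1 = pos (2,n) + 1"
    using interiorN[OF mv1 nes1 net1 N1] by blast
  have D1: "(pos (1,n) + 1 = pos (2,n) \<and> pos (1,n-1) = pos (2,n) + 1) \<or> (pos (1,n) + 1 = pos (2,n) \<and> pos (3,n) = pos (2,n) + 1) \<or> (pos (1,n) + 1 = pos (2,n) \<and> pos (2,n-1) = pos (2,n) + 1) \<or> (pos (1,n-1) + 1 = pos (2,n) \<and> pos (1,n) = pos (2,n) + 1) \<or> (pos (1,n-1) + 1 = pos (2,n) \<and> pos (3,n) = pos (2,n) + 1) \<or> (pos (1,n-1) + 1 = pos (2,n) \<and> pos (2,n-1) = pos (2,n) + 1) \<or> (pos (3,n) + 1 = pos (2,n) \<and> pos (1,n) = pos (2,n) + 1) \<or> (pos (3,n) + 1 = pos (2,n) \<and> pos (1,n-1) = pos (2,n) + 1) \<or> (pos (3,n) + 1 = pos (2,n) \<and> pos (2,n-1) = pos (2,n) + 1) \<or> (pos (2,n-1) + 1 = pos (2,n) \<and> pos (1,n) = pos (2,n) + 1) \<or> (pos (2,n-1) + 1 = pos (2,n) \<and> pos (1,n-1) = pos (2,n) + 1) \<or> (pos (2,n-1)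 + 1 = pos (2,n) \<and> pos (3,n) = pos (2,n) + 1)" using I1 by auto
  have NS: "\<forall>u\<in>V. sg_adj s u \<longrightarrow> u \<in> {(1,n-1),(2,n),(2,n-1)}" using prm s by (auto simp: V C_shape_def sg_adj_def abs_le_iff)
  obtain z where Z: "z \<in> {(1,n-1),(2,n),(2,n-1)}" "pos z = 1" using startN[OF _ NS] cL by auto
  have D2: "pos (1,n-1) = 1 \<or> pos (2,n) = 1 \<or> pos (2,n-1) = 1" using Z by auto
  from D0 show False
  proof (elim disjE conjE)
    assume h0: "pos (2,n) + 1 = pos (3,n)" "pos (2,n-1) = pos (3,n) + 1"
    from D1 show False
    proof (elim disjE conjE)
      assume h1: "pos (1,n) + 1 = pos (2,n)" "pos (1,n-1) = pos (2,n) + 1"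
      show False using h0 h1 lt ps0 psL cL by linarith
    next
      assume h1: "pos (1,n) + 1 = pos (2,n)" "pos (3,n) = pos (2,n) + 1"
      show False using h0 h1 lt ps0 psL cL by linarith
    next
      assume h1: "pos (1,n) + 1 = pos (2,n)" "pos (2,n-1) = pos (2,n) + 1"
      show False using h0 h1 lt ps0 psL cL by linarith
    next
      assume h1: "pos (1,n-1) + 1 = pos (2,n)" "pos (1,n) = pos (2,n) + 1"
      show False using h0 h1 lt ps0 psL cL by linarith
    next
      assume h1: "pos (1,n-1) + 1 = pos (2,n)" "pos (3,n) = pos (2,n) + 1"
      from D2 show False
      proof (elim disjE conjE)
        assume h2: "pos (1,n-1) = 1"
        show False using h0 h1 h2 lt ps0 psL cL by linarith
      next
        assume h2: "pos (2,n) = 1"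
        show False using h0 h1 h2 lt ps0 psL cL by linarith
      next
        assume h2: "pos (2,n-1) = 1"
        show False using h0 h1 h2 lt ps0 psL cL by linarith
      qed
    next
      assume h1: "pos (1,n-1) + 1 = pos (2,n)" "pos (2,n-1) = pos (2,n) + 1"
      show False using h0 h1 lt ps0 psL cL by linarith
    next
      assume h1: "pos (3,n) + 1 = pos (2,n)" "pos (1,n) = pos (2,n) + 1"
      show False using h0 h1 lt ps0 psL cL by linarith
    next
      assume h1: "pos (3,n) + 1 = pos (2,n)" "pos (1,n-1) = pos (2,n) + 1"
      show False using h0 h1 lt ps0 psL cL by linarith
    next
      assume h1: "pos (3,n) + 1 = pos (2,n)" "pos (2,n-1) = pos (2,n) + 1"
      show False using h0 h1 lt ps0 psL cL by linarith
    next
      assume h1: "pos (2,n-1) + 1 = pos (2,n)" "pos (1,n) = pos (2,n) + 1"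
      show False using h0 h1 lt ps0 psL cL by linarith
    next
      assume h1: "pos (2,n-1) + 1 = pos (2,n)" "pos (1,n-1) = pos (2,n) + 1"
      show False using h0 h1 lt ps0 psL cL by linarith
    next
      assume h1: "pos (2,n-1) + 1 = pos (2,n)" "pos (3,n) = pos (2,n) + 1"
      show False using h0 h1 lt ps0 psL cL by linarith
    qed
  next
    assume h0: "pos (2,n-1) + 1 = pos (3,n)" "pos (2,n) = pos (3,n) + 1"
    show False using h0 lt ps0 psL cL by linarith
  qed
qed

lemma F7D:
  assumes V: "V = C_shape 3 n 1 l c" and prm: "l \<ge> 1" "c \<ge> 1" "n - l - c = 1" and s: "s = (1,n-1)" and t: "t = (2,n)"
  shows False
proof -
  have mem: "(1,n) \<in> V" "(1,n-1) \<in> V" "(1,n-2) \<in> V" "(2,n) \<in> V" "(2,n-1) \<in> V" "(2,n-2) \<in> V" "(3,n) \<in> V" using prm by (auto simp: V C_shape_def)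
  have dst: "pos (1,n) \<noteq> pos (1,n-1)" "pos (1,n) \<noteq> pos (1,n-2)" "pos (1,n) \<noteq> pos (2,n)" "pos (1,n) \<noteq> pos (2,n-1)" "pos (1,n) \<noteq> pos (2,n-2)" "pos (1,n) \<noteq> pos (3,n)" "pos (1,n-1) \<noteq> pos (1,n-2)" "pos (1,n-1) \<noteq> pos (2,n)" "pos (1,n-1) \<noteq> pos (2,n-1)" "pos (1,n-1) \<noteq> pos (2,n-2)" "pos (1,n-1) \<noteq> pos (3,n)" "pos (1,n-2) \<noteq> pos (2,n)" "pos (1,n-2) \<noteq> pos (2,n-1)" "pos (1,n-2) \<noteq> pos (2,n-2)" "pos (1,n-2) \<noteq> pos (3,n)" "pos (2,n) \<noteq> pos (2,n-1)" "pos (2,n) \<noteq> pos (2,n-2)" "pos (2,n) \<noteq> pos (3,n)" "pos (2,n-1) \<noteq> pos (2,n-2)" "pos (2,n-1) \<noteq> pos (3,n)" "pos (2,n-2) \<noteq> pos (3,n)" using mem prm by (simp_all add: pos_eq_iff)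
  have lt: "pos (1,n) < length ps" "pos (1,n-1) < length ps" "pos (1,n-2) < length ps" "pos (2,n) < length ps" "pos (2,n-1) < length ps" "pos (2,n-2) < length ps" "pos (3,n) < length ps" using mem pos_props by auto
  have ps0: "pos (1,n-1) = 0" using pos_s s by simp
  have psL: "pos (2,n) + 1 = length ps" using pos_t t ne by simp
  have S: "{(1,n),(1,n-1),(1,n-2),(2,n),(2,n-1),(2,n-2),(3,n)} \<subseteq> V" using mem by auto
  have cS: "card ({(1,n),(1,n-1),(1,n-2),(2,n),(2,n-1),(2,n-2),(3,n)} :: vtx set) = 7" using prm by simp
  have cL: "length ps \<ge> 7" using card_mono[OF finV S] cS cardV by simp
  have N0: "\<forall>u\<in>V. sg_adj (3,n) u \<longrightarrow> u \<in> {(2,n),(2,n-1)}" using prm by (auto simp: V C_shape_def sg_adj_def abs_le_iff)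
  have mv0: "(3,n) \<in> V" using prm by (simp add: V C_shape_def)
  have nes0: "(3,n) \<noteq> s" and net0: "(3,n) \<noteq> t" using prm s t by simp_all
  obtain a0 b0 where I0: "a0 \<in> {(2,n),(2,n-1)}" "b0 \<in> {(2,n),(2,n-1)}" "a0 \<noteq> b0" "pos a0 + 1 = pos (3,n)" "pos b0 = pos (3,n) + 1"
    using interiorN[OF mv0 nes0 net0 N0] by blast
  have D0: "(pos (2,n) + 1 = pos (3,n) \<and> pos (2,n-1) = pos (3,n) + 1) \<or> (pos (2,n-1) + 1 = pos (3,n) \<and> pos (2,n) = pos (3,n) + 1)" using I0 by auto
  have N1: "\<forall>u\<in>V. sg_adj (1,n) u \<longrightarrow> u \<in> {(1,n-1),(2,n),(2,n-1)}" using prm by (auto simp: V C_shape_def sg_adj_def abs_le_iff)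
  have mv1: "(1,n) \<in> V" using prm by (simp add: V C_shape_def)
  have nes1: "(1,n) \<noteq> s" and net1: "(1,n) \<noteq> t" using prm s t by simp_all
  obtain a1 b1 where I1: "a1 \<in> {(1,n-1),(2,n),(2,n-1)}" "b1 \<in> {(1,n-1),(2,n),(2,n-1)}" "a1 \<noteq> b1" "pos a1 + 1 = pos (1,n)" "pos b1 = pos (1,n) + 1"
    using interiorN[OF mv1 nes1 net1 N1] by blast
  have D1: "(pos (1,n-1) + 1 = pos (1,n) \<and> pos (2,n) = pos (1,n) + 1) \<or> (pos (1,n-1) + 1 = pos (1,n) \<and> pos (2,n-1) = pos (1,n) + 1) \<or> (pos (2,n) + 1 = pos (1,n) \<and> pos (1,n-1) = pos (1,n) + 1) \<or> (pos (2,n) + 1 = pos (1,n) \<and> pos (2,n-1) = pos (1,n) + 1) \<or> (pos (2,n-1) + 1 = pos (1,n) \<and> pos (1,n-1) = pos (1,n) + 1) \<or> (pos (2,n-1) + 1 = pos (1,n) \<and> pos (2,n) = pos (1,n) + 1)" using I1 by auto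
  from D0 show False
  proof (elim disjE conjE)
    assume h0: "pos (2,n) + 1 = pos (3,n)" "pos (2,n-1) = pos (3,n) + 1"
    show False using h0 lt ps0 psL cL by linarith
  next
    assume h0: "pos (2,n-1) + 1 = pos (3,n)" "pos (2,n) = pos (3,n) + 1"
    from D1 show False
    proof (elim disjE conjE)
      assume h1: "pos (1,n-1) + 1 = pos (1,n)" "pos (2,n) = pos (1,n) + 1"
      show False using h0 h1 lt ps0 psL cL by linarith
    next
      assume h1: "pos (1,n-1) + 1 = pos (1,n)" "pos (2,n-1) = pos (1,n) + 1"
      show False using h0 h1 lt ps0 psL cL by linarith
    next
      assume h1: "pos (2,n) + 1 = pos (1,n)" "pos (1,n-1) = pos (1,n) + 1"
      show False using h0 h1 lt ps0 psL cL by linarith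
    next
      assume h1: "pos (2,n) + 1 = pos (1,n)" "pos (2,n-1) = pos (1,n) + 1"
      show False using h0 h1 lt ps0 psL cL by linarith
    next
      assume h1: "pos (2,n-1) + 1 = pos (1,n)" "pos (1,n-1) = pos (1,n) + 1"
      show False using h0 h1 lt ps0 psL cL by linarith
    next
      assume h1: "pos (2,n-1) + 1 = pos (1,n)" "pos (2,n) = pos (1,n) + 1"
      have "pos (1,n) = pos (3,n)" using h0 h1 lt ps0 psL cL by linarith
      then show False using dst by simp
    qed
  qed
qed

lemma F8A1:
  assumes V: "V = C_shape m 3 1 1 1" and prm: "m - 1 \<ge> 2" and s: "s = (m-1,1)" and t: "t = (m-1,3)"
  shows False
proof -
  have mem: "(1,1) \<in> V" "(m-1,1) \<in> V" "(m-1,2) \<in> V" "(m-1,3) \<in> V" "(m,1) \<in> V" "(m,3) \<in> V" using prm by (auto simp: V C_shape_def)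
  have dst: "pos (1,1) \<noteq> pos (m-1,1)" "pos (1,1) \<noteq> pos (m-1,2)" "pos (1,1) \<noteq> pos (m-1,3)" "pos (1,1) \<noteq> pos (m,1)" "pos (1,1) \<noteq> pos (m,3)" "pos (m-1,1) \<noteq> pos (m-1,2)" "pos (m-1,1) \<noteq> pos (m-1,3)" "pos (m-1,1) \<noteq> pos (m,1)" "pos (m-1,1) \<noteq> pos (m,3)" "pos (m-1,2) \<noteq> pos (m-1,3)" "pos (m-1,2) \<noteq> pos (m,1)" "pos (m-1,2) \<noteq> pos (m,3)" "pos (m-1,3) \<noteq> pos (m,1)" "pos (m-1,3) \<noteq> pos (m,3)" "pos (m,1) \<noteq> pos (m,3)" using mem prm by (simp_all add: pos_eq_iff)
  have lt: "pos (1,1) < length ps" "pos (m-1,1) < length ps" "pos (m-1,2) < length ps" "pos (m-1,3) < length ps" "pos (m,1) < length ps" "pos (m,3) < length ps" using mem pos_props by auto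
  have ps0: "pos (m-1,1) = 0" using pos_s s by simp
  have psL: "pos (m-1,3) + 1 = length ps" using pos_t t ne by simp
  have S: "{(1,1),(m-1,1),(m-1,2),(m-1,3),(m,1),(m,3)} \<subseteq> V" using mem by auto
  have cS: "card ({(1,1),(m-1,1),(m-1,2),(m-1,3),(m,1),(m,3)} :: vtx set) = 6" using prm by simp
  have cL: "length ps \<ge> 6" using card_mono[OF finV S] cS cardV by simp
  have N0: "\<forall>u\<in>V. sg_adj (m,1) u \<longrightarrow> u \<in> {(m-1,1),(m-1,2)}" using prm by (auto simp: V C_shape_def sg_adj_def abs_le_iff)
  have mv0: "(m,1) \<in> V" using prm by (simp add: V C_shape_def)
  have nes0: "(m,1) \<noteq> s" and net0: "(m,1) \<noteq> t" using prm s t by simp_all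
  obtain a0 b0 where I0: "a0 \<in> {(m-1,1),(m-1,2)}" "b0 \<in> {(m-1,1),(m-1,2)}" "a0 \<noteq> b0" "pos a0 + 1 = pos (m,1)" "pos b0 = pos (m,1) + 1"
    using interiorN[OF mv0 nes0 net0 N0] by blast
  have D0: "(pos (m-1,1) + 1 = pos (m,1) \<and> pos (m-1,2) = pos (m,1) + 1) \<or> (pos (m-1,2) + 1 = pos (m,1) \<and> pos (m-1,1) = pos (m,1) + 1)" using I0 by auto
  have N1: "\<forall>u\<in>V. sg_adj (m,3) u \<longrightarrow> u \<in> {(m-1,3),(m-1,2)}" using prm by (auto simp: V C_shape_def sg_adj_def abs_le_iff)
  have mv1: "(m,3) \<in> V" using prm by (simp add: V C_shape_def)
  have nes1: "(m,3) \<noteq> s" and net1: "(m,3) \<noteq> t" using prm s t by simp_all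
  obtain a1 b1 where I1: "a1 \<in> {(m-1,3),(m-1,2)}" "b1 \<in> {(m-1,3),(m-1,2)}" "a1 \<noteq> b1" "pos a1 + 1 = pos (m,3)" "pos b1 = pos (m,3) + 1"
    using interiorN[OF mv1 nes1 net1 N1] by blast
  have D1: "(pos (m-1,3) + 1 = pos (m,3) \<and> pos (m-1,2) = pos (m,3) + 1) \<or> (pos (m-1,2) + 1 = pos (m,3) \<and> pos (m-1,3) = pos (m,3) + 1)" using I1 by auto
  from D0 show False
  proof (elim disjE conjE)
    assume h0: "pos (m-1,1) + 1 = pos (m,1)" "pos (m-1,2) = pos (m,1) + 1"
    from D1 show False
    proof (elim disjE conjE)
      assume h1: "pos (m-1,3) + 1 = pos (m,3)" "pos (m-1,2) = pos (m,3) + 1"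
      show False using h0 h1 lt ps0 psL cL by linarith
    next
      assume h1: "pos (m-1,2) + 1 = pos (m,3)" "pos (m-1,3) = pos (m,3) + 1"
      show False using h0 h1 lt ps0 psL cL by linarith
    qed
  next
    assume h0: "pos (m-1,2) + 1 = pos (m,1)" "pos (m-1,1) = pos (m,1) + 1"
    show False using h0 lt ps0 psL cL by linarith
  qed
qed

lemma F8A2:
  assumes V: "V = C_shape m 3 1 1 1" and prm: "m - 1 \<ge> 2" and s: "s = (m-1,3)" and t: "t = (m-1,1)"
  shows False
proof -
  have mem: "(1,1) \<in> V" "(m-1,1) \<in> V" "(m-1,2) \<in> V" "(m-1,3) \<in> V" "(m,1) \<in> V" "(m,3) \<in> V" using prm by (auto simp: V C_shape_def)
  have dst: "pos (1,1) \<noteq> pos (m-1,1)" "pos (1,1) \<noteq> pos (m-1,2)" "pos (1,1) \<noteq> pos (m-1,3)" "pos (1,1) \<noteq> pos (m,1)" "pos (1,1) \<noteq> pos (m,3)" "pos (m-1,1) \<noteq> pos (m-1,2)" "pos (m-1,1) \<noteq> pos (m-1,3)" "pos (m-1,1) \<noteq> pos (m,1)" "pos (m-1,1) \<noteq> pos (m,3)" "pos (m-1,2) \<noteq> pos (m-1,3)" "pos (m-1,2) \<noteq> pos (m,1)" "pos (m-1,2) \<noteq> pos (m,3)" "pos (m-1,3) \<noteq> pos (m,1)" "pos (m-1,3) \<noteq> pos (m,3)" "pos (m,1) \<noteq> pos (m,3)" using mem prm by (simp_all add: pos_eq_iff)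
  have lt: "pos (1,1) < length ps" "pos (m-1,1) < length ps" "pos (m-1,2) < length ps" "pos (m-1,3) < length ps" "pos (m,1) < length ps" "pos (m,3) < length ps" using mem pos_props by auto
  have ps0: "pos (m-1,3) = 0" using pos_s s by simp
  have psL: "pos (m-1,1) + 1 = length ps" using pos_t t ne by simp
  have S: "{(1,1),(m-1,1),(m-1,2),(m-1,3),(m,1),(m,3)} \<subseteq> V" using mem by auto
  have cS: "card ({(1,1),(m-1,1),(m-1,2),(m-1,3),(m,1),(m,3)} :: vtx set) = 6" using prm by simp
  have cL: "length ps \<ge> 6" using card_mono[OF finV S] cS cardV by simp
  have N0: "\<forall>u\<in>V. sg_adj (m,1) u \<longrightarrow> u \<in> {(m-1,1),(m-1,2)}" using prm by (auto simp: V C_shape_def sg_adj_def abs_le_iff)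
  have mv0: "(m,1) \<in> V" using prm by (simp add: V C_shape_def)
  have nes0: "(m,1) \<noteq> s" and net0: "(m,1) \<noteq> t" using prm s t by simp_all
  obtain a0 b0 where I0: "a0 \<in> {(m-1,1),(m-1,2)}" "b0 \<in> {(m-1,1),(m-1,2)}" "a0 \<noteq> b0" "pos a0 + 1 = pos (m,1)" "pos b0 = pos (m,1) + 1"
    using interiorN[OF mv0 nes0 net0 N0] by blast
  have D0: "(pos (m-1,1) + 1 = pos (m,1) \<and> pos (m-1,2) = pos (m,1) + 1) \<or> (pos (m-1,2) + 1 = pos (m,1) \<and> pos (m-1,1) = pos (m,1) + 1)" using I0 by auto
  have N1: "\<forall>u\<in>V. sg_adj (m,3) u \<longrightarrow> u \<in> {(m-1,3),(m-1,2)}" using prm by (auto simp: V C_shape_def sg_adj_def abs_le_iff)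
  have mv1: "(m,3) \<in> V" using prm by (simp add: V C_shape_def)
  have nes1: "(m,3) \<noteq> s" and net1: "(m,3) \<noteq> t" using prm s t by simp_all
  obtain a1 b1 where I1: "a1 \<in> {(m-1,3),(m-1,2)}" "b1 \<in> {(m-1,3),(m-1,2)}" "a1 \<noteq> b1" "pos a1 + 1 = pos (m,3)" "pos b1 = pos (m,3) + 1"
    using interiorN[OF mv1 nes1 net1 N1] by blast
  have D1: "(pos (m-1,3) + 1 = pos (m,3) \<and> pos (m-1,2) = pos (m,3) + 1) \<or> (pos (m-1,2) + 1 = pos (m,3) \<and> pos (m-1,3) = pos (m,3) + 1)" using I1 by auto
  from D0 show False
  proof (elim disjE conjE)
    assume h0: "pos (m-1,1) + 1 = pos (m,1)" "pos (m-1,2) = pos (m,1) + 1"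
    show False using h0 lt ps0 psL cL by linarith
  next
    assume h0: "pos (m-1,2) + 1 = pos (m,1)" "pos (m-1,1) = pos (m,1) + 1"
    from D1 show False
    proof (elim disjE conjE)
      assume h1: "pos (m-1,3) + 1 = pos (m,3)" "pos (m-1,2) = pos (m,3) + 1"
      show False using h0 h1 lt ps0 psL cL by linarith
    next
      assume h1: "pos (m-1,2) + 1 = pos (m,3)" "pos (m-1,3) = pos (m,3) + 1"
      show False using h0 h1 lt ps0 psL cL by linarith
    qed
  qed
qed

lemma F8B1:
  assumes V: "V = C_shape 3 3 1 1 1" and prm: "True" and s: "s = (1,1)" and t: "t = (2,3)"
  shows False
proof -
  have mem: "(1,1) \<in> V" "(1,2) \<in> V" "(1,3) \<in> V" "(2,1) \<in> V" "(2,2) \<in> V" "(2,3) \<in> V" "(3,1) \<in> V" "(3,3) \<in> V" using prm by (auto simp: V C_shape_def)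
  have dst: "pos (1,1) \<noteq> pos (1,2)" "pos (1,1) \<noteq> pos (1,3)" "pos (1,1) \<noteq> pos (2,1)" "pos (1,1) \<noteq> pos (2,2)" "pos (1,1) \<noteq> pos (2,3)" "pos (1,1) \<noteq> pos (3,1)" "pos (1,1) \<noteq> pos (3,3)" "pos (1,2) \<noteq> pos (1,3)" "pos (1,2) \<noteq> pos (2,1)" "pos (1,2) \<noteq> pos (2,2)" "pos (1,2) \<noteq> pos (2,3)" "pos (1,2) \<noteq> pos (3,1)" "pos (1,2) \<noteq> pos (3,3)" "pos (1,3) \<noteq> pos (2,1)" "pos (1,3) \<noteq> pos (2,2)" "pos (1,3) \<noteq> pos (2,3)" "pos (1,3) \<noteq> pos (3,1)" "pos (1,3) \<noteq> pos (3,3)" "pos (2,1) \<noteq> pos (2,2)" "pos (2,1) \<noteq> pos (2,3)" "pos (2,1) \<noteq> pos (3,1)" "pos (2,1) \<noteq> pos (3,3)" "pos (2,2) \<noteq> pos (2,3)" "pos (2,2) \<noteq> pos (3,1)" "pos (2,2) \<noteq> pos (3,3)" "pos (2,3) \<noteq> pos (3,1)" "pos (2,3) \<noteq> pos (3,3)" "pos (3,1) \<noteq> pos (3,3)" using mem prm by (simp_all add: pos_eq_iff)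
  have lt: "pos (1,1) < length ps" "pos (1,2) < length ps" "pos (1,3) < length ps" "pos (2,1) < length ps" "pos (2,2) < length ps" "pos (2,3) < length ps" "pos (3,1) < length ps" "pos (3,3) < length ps" using mem pos_props by auto
  have ps0: "pos (1,1) = 0" using pos_s s by simp
  have psL: "pos (2,3) + 1 = length ps" using pos_t t ne by simp
  have S: "{(1,1),(1,2),(1,3),(2,1),(2,2),(2,3),(3,1),(3,3)} \<subseteq> V" using mem by auto
  have cS: "card ({(1,1),(1,2),(1,3),(2,1),(2,2),(2,3),(3,1),(3,3)} :: vtx set) = 8" using prm by simp
  have cL: "length ps \<ge> 8" using card_mono[OF finV S] cS cardV by simp
  have N0: "\<forall>u\<in>V. sg_adj (3,3) u \<longrightarrow> u \<in> {(2,3),(2,2)}" using prm by (auto simp: V C_shape_def sg_adj_def abs_le_iff)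
  have mv0: "(3,3) \<in> V" using prm by (simp add: V C_shape_def)
  have nes0: "(3,3) \<noteq> s" and net0: "(3,3) \<noteq> t" using prm s t by simp_all
  obtain a0 b0 where I0: "a0 \<in> {(2,3),(2,2)}" "b0 \<in> {(2,3),(2,2)}" "a0 \<noteq> b0" "pos a0 + 1 = pos (3,3)" "pos b0 = pos (3,3) + 1"
    using interiorN[OF mv0 nes0 net0 N0] by blast
  have D0: "(pos (2,3) + 1 = pos (3,3) \<and> pos (2,2) = pos (3,3) + 1) \<or> (pos (2,2) + 1 = pos (3,3) \<and> pos (2,3) = pos (3,3) + 1)" using I0 by auto
  have N1: "\<forall>u\<in>V. sg_adj (3,1) u \<longrightarrow> u \<in> {(2,1),(2,2)}" using prm by (auto simp: V C_shape_def sg_adj_def abs_le_iff)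
  have mv1: "(3,1) \<in> V" using prm by (simp add: V C_shape_def)
  have nes1: "(3,1) \<noteq> s" and net1: "(3,1) \<noteq> t" using prm s t by simp_all
  obtain a1 b1 where I1: "a1 \<in> {(2,1),(2,2)}" "b1 \<in> {(2,1),(2,2)}" "a1 \<noteq> b1" "pos a1 + 1 = pos (3,1)" "pos b1 = pos (3,1) + 1"
    using interiorN[OF mv1 nes1 net1 N1] by blast
  have D1: "(pos (2,1) + 1 = pos (3,1) \<and> pos (2,2) = pos (3,1) + 1) \<or> (pos (2,2) + 1 = pos (3,1) \<and> pos (2,1) = pos (3,1) + 1)" using I1 by auto
  have N2: "\<forall>u\<in>V. sg_adj (1,3) u \<longrightarrow> u \<in> {(1,2),(2,2),(2,3)}" using prm by (auto simp: V C_shape_def sg_adj_def abs_le_iff)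
  have mv2: "(1,3) \<in> V" using prm by (simp add: V C_shape_def)
  have nes2: "(1,3) \<noteq> s" and net2: "(1,3) \<noteq> t" using prm s t by simp_all
  obtain a2 b2 where I2: "a2 \<in> {(1,2),(2,2),(2,3)}" "b2 \<in> {(1,2),(2,2),(2,3)}" "a2 \<noteq> b2" "pos a2 + 1 = pos (1,3)" "pos b2 = pos (1,3) + 1"
    using interiorN[OF mv2 nes2 net2 N2] by blast
  have D2: "(pos (1,2) + 1 = pos (1,3) \<and> pos (2,2) = pos (1,3) + 1) \<or> (pos (1,2) + 1 = pos (1,3) \<and> pos (2,3) = pos (1,3) + 1) \<or> (pos (2,2) + 1 = pos (1,3) \<and> pos (1,2) = pos (1,3) + 1) \<or> (pos (2,2) + 1 = pos (1,3) \<and> pos (2,3) = pos (1,3) + 1) \<or> (pos (2,3) + 1 = pos (1,3) \<and> pos (1,2) = pos (1,3) + 1) \<or> (pos (2,3) + 1 = pos (1,3) \<and> pos (2,2) = pos (1,3) + 1)" using I2 by auto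
  from D0 show False
  proof (elim disjE conjE)
    assume h0: "pos (2,3) + 1 = pos (3,3)" "pos (2,2) = pos (3,3) + 1"
    show False using h0 lt ps0 psL cL by linarith
  next
    assume h0: "pos (2,2) + 1 = pos (3,3)" "pos (2,3) = pos (3,3) + 1"
    from D1 show False
    proof (elim disjE conjE)
      assume h1: "pos (2,1) + 1 = pos (3,1)" "pos (2,2) = pos (3,1) + 1"
      from D2 show False
      proof (elim disjE conjE)
        assume h2: "pos (1,2) + 1 = pos (1,3)" "pos (2,2) = pos (1,3) + 1"
        have "pos (1,2) = pos (2,1)" using h0 h1 h2 lt ps0 psL cL by linarith
        then show False using dst by simp
      next
        assume h2: "pos (1,2) + 1 = pos (1,3)" "pos (2,3) = pos (1,3) + 1"
        have "pos (1,2) = pos (2,2)" using h0 h1 h2 lt ps0 psL cL by linarith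
        then show False using dst by simp
      next
        assume h2: "pos (2,2) + 1 = pos (1,3)" "pos (1,2) = pos (1,3) + 1"
        have "pos (1,2) = pos (2,3)" using h0 h1 h2 lt ps0 psL cL by linarith
        then show False using dst by simp
      next
        assume h2: "pos (2,2) + 1 = pos (1,3)" "pos (2,3) = pos (1,3) + 1"
        have "pos (1,3) = pos (3,3)" using h0 h1 h2 lt ps0 psL cL by linarith
        then show False using dst by simp
      next
        assume h2: "pos (2,3) + 1 = pos (1,3)" "pos (1,2) = pos (1,3) + 1"
        show False using h0 h1 h2 lt ps0 psL cL by linarith
      next
        assume h2: "pos (2,3) + 1 = pos (1,3)" "pos (2,2) = pos (1,3) + 1"
        show False using h0 h1 h2 lt ps0 psL cL by linarith
      qed
    next
      assume h1: "pos (2,2) + 1 = pos (3,1)" "pos (2,1) = pos (3,1) + 1"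
      have "pos (2,1) = pos (2,3)" using h0 h1 lt ps0 psL cL by linarith
      then show False using dst by simp
    qed
  qed
qed

lemma F8B2:
  assumes V: "V = C_shape 3 3 1 1 1" and prm: "True" and s: "s = (1,3)" and t: "t = (2,1)"
  shows False
proof -
  have mem: "(1,1) \<in> V" "(1,2) \<in> V" "(1,3) \<in> V" "(2,1) \<in> V" "(2,2) \<in> V" "(2,3) \<in> V" "(3,1) \<in> V" "(3,3) \<in> V" using prm by (auto simp: V C_shape_def)
  have dst: "pos (1,1) \<noteq> pos (1,2)" "pos (1,1) \<noteq> pos (1,3)" "pos (1,1) \<noteq> pos (2,1)" "pos (1,1) \<noteq> pos (2,2)" "pos (1,1) \<noteq> pos (2,3)" "pos (1,1) \<noteq> pos (3,1)" "pos (1,1) \<noteq> pos (3,3)" "pos (1,2) \<noteq> pos (1,3)" "pos (1,2) \<noteq> pos (2,1)" "pos (1,2) \<noteq> pos (2,2)" "pos (1,2) \<noteq> pos (2,3)" "pos (1,2) \<noteq> pos (3,1)" "pos (1,2) \<noteq> pos (3,3)" "pos (1,3) \<noteq> pos (2,1)" "pos (1,3) \<noteq> pos (2,2)" "pos (1,3) \<noteq> pos (2,3)" "pos (1,3) \<noteq> pos (3,1)" "pos (1,3) \<noteq> pos (3,3)" "pos (2,1) \<noteq> pos (2,2)" "pos (2,1) \<noteq> pos (2,3)" "pos (2,1) \<noteq> pos (3,1)" "pos (2,1) \<noteq> pos (3,3)" "pos (2,2) \<noteq> pos (2,3)" "pos (2,2) \<noteq> pos (3,1)" "pos (2,2) \<noteq>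 pos (3,3)" "pos (2,3) \<noteq> pos (3,1)" "pos (2,3) \<noteq> pos (3,3)" "pos (3,1) \<noteq> pos (3,3)" using mem prm by (simp_all add: pos_eq_iff)
  have lt: "pos (1,1) < length ps" "pos (1,2) < length ps" "pos (1,3) < length ps" "pos (2,1) < length ps" "pos (2,2) < length ps" "pos (2,3) < length ps" "pos (3,1) < length ps" "pos (3,3) < length ps" using mem pos_props by auto
  have ps0: "pos (1,3) = 0" using pos_s s by simp
  have psL: "pos (2,1) + 1 = length ps" using pos_t t ne by simp
  have S: "{(1,1),(1,2),(1,3),(2,1),(2,2),(2,3),(3,1),(3,3)} \<subseteq> V" using mem by auto
  have cS: "card ({(1,1),(1,2),(1,3),(2,1),(2,2),(2,3),(3,1),(3,3)} :: vtx set) = 8" using prm by simp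
  have cL: "length ps \<ge> 8" using card_mono[OF finV S] cS cardV by simp
  have N0: "\<forall>u\<in>V. sg_adj (3,1) u \<longrightarrow> u \<in> {(2,1),(2,2)}" using prm by (auto simp: V C_shape_def sg_adj_def abs_le_iff)
  have mv0: "(3,1) \<in> V" using prm by (simp add: V C_shape_def)
  have nes0: "(3,1) \<noteq> s" and net0: "(3,1) \<noteq> t" using prm s t by simp_all
  obtain a0 b0 where I0: "a0 \<in> {(2,1),(2,2)}" "b0 \<in> {(2,1),(2,2)}" "a0 \<noteq> b0" "pos a0 + 1 = pos (3,1)" "pos b0 = pos (3,1) + 1"
    using interiorN[OF mv0 nes0 net0 N0] by blast
  have D0: "(pos (2,1) + 1 = pos (3,1) \<and> pos (2,2) = pos (3,1) + 1) \<or> (pos (2,2) + 1 = pos (3,1) \<and> pos (2,1) = pos (3,1) + 1)" using I0 by auto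
  have N1: "\<forall>u\<in>V. sg_adj (3,3) u \<longrightarrow> u \<in> {(2,3),(2,2)}" using prm by (auto simp: V C_shape_def sg_adj_def abs_le_iff)
  have mv1: "(3,3) \<in> V" using prm by (simp add: V C_shape_def)
  have nes1: "(3,3) \<noteq> s" and net1: "(3,3) \<noteq> t" using prm s t by simp_all
  obtain a1 b1 where I1: "a1 \<in> {(2,3),(2,2)}" "b1 \<in> {(2,3),(2,2)}" "a1 \<noteq> b1" "pos a1 + 1 = pos (3,3)" "pos b1 = pos (3,3) + 1"
    using interiorN[OF mv1 nes1 net1 N1] by blast
  have D1: "(pos (2,3) + 1 = pos (3,3) \<and> pos (2,2) = pos (3,3) + 1) \<or> (pos (2,2) + 1 = pos (3,3) \<and> pos (2,3) = pos (3,3) + 1)" using I1 by auto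
  have N2: "\<forall>u\<in>V. sg_adj (1,1) u \<longrightarrow> u \<in> {(1,2),(2,2),(2,1)}" using prm by (auto simp: V C_shape_def sg_adj_def abs_le_iff)
  have mv2: "(1,1) \<in> V" using prm by (simp add: V C_shape_def)
  have nes2: "(1,1) \<noteq> s" and net2: "(1,1) \<noteq> t" using prm s t by simp_all
  obtain a2 b2 where I2: "a2 \<in> {(1,2),(2,2),(2,1)}" "b2 \<in> {(1,2),(2,2),(2,1)}" "a2 \<noteq> b2" "pos a2 + 1 = pos (1,1)" "pos b2 = pos (1,1) + 1"
    using interiorN[OF mv2 nes2 net2 N2] by blast
  have D2: "(pos (1,2) + 1 = pos (1,1) \<and> pos (2,2) = pos (1,1) + 1) \<or> (pos (1,2) + 1 = pos (1,1) \<and> pos (2,1) = pos (1,1) + 1) \<or> (pos (2,2) + 1 = pos (1,1) \<and> pos (1,2) = pos (1,1) + 1) \<or> (pos (2,2) + 1 = pos (1,1) \<and> pos (2,1) = pos (1,1) + 1) \<or> (pos (2,1) + 1 = pos (1,1) \<and> pos (1,2) = pos (1,1) + 1) \<or> (pos (2,1) + 1 = pos (1,1) \<and> pos (2,2) = pos (1,1) + 1)" using I2 by auto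
  from D0 show False
  proof (elim disjE conjE)
    assume h0: "pos (2,1) + 1 = pos (3,1)" "pos (2,2) = pos (3,1) + 1"
    show False using h0 lt ps0 psL cL by linarith
  next
    assume h0: "pos (2,2) + 1 = pos (3,1)" "pos (2,1) = pos (3,1) + 1"
    from D1 show False
    proof (elim disjE conjE)
      assume h1: "pos (2,3) + 1 = pos (3,3)" "pos (2,2) = pos (3,3) + 1"
      from D2 show False
      proof (elim disjE conjE)
        assume h2: "pos (1,2) + 1 = pos (1,1)" "pos (2,2) = pos (1,1) + 1"
        have "pos (1,1) = pos (3,3)" using h0 h1 h2 lt ps0 psL cL by linarith
        then show False using dst by simp
      next
        assume h2: "pos (1,2) + 1 = pos (1,1)" "pos (2,1) = pos (1,1) + 1"
        have "pos (1,1) = pos (3,1)" using h0 h1 h2 lt ps0 psL cL by linarith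
        then show False using dst by simp
      next
        assume h2: "pos (2,2) + 1 = pos (1,1)" "pos (1,2) = pos (1,1) + 1"
        have "pos (1,1) = pos (3,1)" using h0 h1 h2 lt ps0 psL cL by linarith
        then show False using dst by simp
      next
        assume h2: "pos (2,2) + 1 = pos (1,1)" "pos (2,1) = pos (1,1) + 1"
        have "pos (1,1) = pos (3,1)" using h0 h1 h2 lt ps0 psL cL by linarith
        then show False using dst by simp
      next
        assume h2: "pos (2,1) + 1 = pos (1,1)" "pos (1,2) = pos (1,1) + 1"
        show False using h0 h1 h2 lt ps0 psL cL by linarith
      next
        assume h2: "pos (2,1) + 1 = pos (1,1)" "pos (2,2) = pos (1,1) + 1"
        show False using h0 h1 h2 lt ps0 psL cL by linarith
      qed
    next
      assume h1: "pos (2,2) + 1 = pos (3,3)" "pos (2,3) = pos (3,3) + 1"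
      have "pos (2,1) = pos (2,3)" using h0 h1 lt ps0 psL cL by linarith
      then show False using dst by simp
    qed
  qed
qed
end


lemma pair_set_order:
  fixes s t A B :: vtx
  assumes "{s, t} = {A, B}" "s \<noteq> t" "fst s \<le> fst t" "fst A < fst B"
  shows "s = A \<and> t = B"
  using assms by (auto simp: doubleton_eq_iff)

theorem lemma7:
  fixes m n k l c d :: int and s t :: vtx
  assumes "m \<ge> 2" "n \<ge> 3" "k \<ge> 1" "l \<ge> 1" "c \<ge> 1"
    and "d = n - l - c" "d \<ge> 1" "m - k \<ge> 1"
    and "s \<in> C_shape m n k l c" "t \<in> C_shape m n k l c" "s \<noteq> t"
    and "fst s \<le> fst t"
    and "ham_path (C_shape m n k l c) s t"
  shows "let V = C_shape m n k l c; a = m - k in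
     \<not> (cut_vertex V s \<or> cut_vertex V t \<or> vertex_cut V {s, t})
   \<and> \<not> (\<exists>w\<in>V. sg_degree V w = 1 \<and> w \<noteq> s \<and> w \<noteq> t)
   \<and> \<not> (m = 3 \<and> a = 2 \<and>
         ((c = 1 \<and> ({s, t} = {(1,1),(2,2)} \<or> {s, t} = {(1,2),(2,1)})) \<or>
          (d = 1 \<and> ({s, t} = {(1,n),(2,n-1)} \<or> {s, t} = {(1,n-1),(2,n)}))))
   \<and> \<not> (n = 3 \<and> k = 1 \<and> c = 1 \<and> d = 1 \<and>
         ((a \<ge> 2 \<and> fst s = m - 1 \<and> fst t = m - 1 \<and> \<bar>snd s - snd t\<bar> = 2) \<or>
          (a = 2 \<and> fst s = 1 \<and> fst t = 2 \<and> \<bar>snd s - snd t\<bar> = 2) \<or>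
          (a > 2 \<and> fst s < m - 1 \<and> t = (m - 1, 2))))
   \<and> \<not> (a = 1 \<and> ((snd s \<le> c \<and> snd t \<le> c) \<or> (snd s > c + l \<and> snd t > c + l)))"
proof -
  define V where "V = C_shape m n k l c"
  obtain ps where ps: "ps \<noteq> []" "distinct ps" "set ps = V" "hd ps = s" "last ps = t"
    "\<forall>i. Suc i < length ps \<longrightarrow> sg_adj (ps ! i) (ps ! Suc i)"
    using assms(13) unfolding ham_path_def V_def by blast
  interpret H: hp V s t ps using ps by unfold_locales auto
  have F1: "\<not> (cut_vertex V s \<or> cut_vertex V t \<or> vertex_cut V {s, t})"
  proof -
    obtain xs where xs: "ps = s # xs" using ps(1,4) by (cases ps) auto
    have "xs \<noteq> []" using xs ps(5) assms(11) by auto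
    then have xs2: "xs = butlast xs @ [t]" using xs ps(5) by (metis append_butlast_last_id last_ConsR)
    define ys where "ys = butlast xs"
    have ys: "ps = s # ys @ [t]" using xs xs2 ys_def by simp
    have ch: "chain ps" using ps(6) unfolding chain_def by blast
    have c1: "chain (ys @ [t])" using chain_tl[OF ch] ys by simp
    have c2: "chain (s # ys)" using chain_butlast[OF ch] ys by (simp add: butlast_append)
    have c3: "chain ys" using chain_tl[OF c2] by simp
    have d: "s \<notin> set ys" "t \<notin> set ys" "s \<noteq> t" using ps(2) ys by auto
    have e1: "V - {s} = set (ys @ [t])" using ps(3) ys d by auto
    have e2: "V - {t} = set (s # ys)" using ps(3) ys d by auto
    have e3: "V - {s, t} = set ys" using ps(3) ys d by auto
    show ?thesis unfolding cut_vertex_def vertex_cut_def e1 e2 e3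
      using chain_conn[OF c1] chain_conn[OF c2] chain_conn[OF c3] by simp
  qed
  have F3: "\<not> (\<exists>w\<in>V. sg_degree V w = 1 \<and> w \<noteq> s \<and> w \<noteq> t)"
  proof
    assume "\<exists>w\<in>V. sg_degree V w = 1 \<and> w \<noteq> s \<and> w \<noteq> t"
    then obtain w where w: "w \<in> V" "sg_degree V w = 1" "w \<noteq> s" "w \<noteq> t" by blast
    obtain u1 u2 where u: "u1 \<in> {u \<in> V. sg_adj w u}" "u2 \<in> {u \<in> V. sg_adj w u}" "u1 \<noteq> u2"
      using H.interiorN[OF w(1) w(3) w(4), of "{u \<in> V. sg_adj w u}"] by blast
    have fin: "finite {u \<in> V. sg_adj w u}" using H.finV by simp
    have "card {u1, u2} \<le> card {u \<in> V. sg_adj w u}" using u fin by (intro card_mono) auto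
    then show False using w(2) u(3) unfolding sg_degree_def by simp
  qed
  have F7: "\<not> (m = 3 \<and> m - k = 2 \<and>
         ((c = 1 \<and> ({s, t} = {(1,1),(2,2)} \<or> {s, t} = {(1,2),(2,1)})) \<or>
          (d = 1 \<and> ({s, t} = {(1,n),(2,n-1)} \<or> {s, t} = {(1,n-1),(2,n)}))))"
  proof
    assume h: "m = 3 \<and> m - k = 2 \<and>
         ((c = 1 \<and> ({s, t} = {(1,1),(2,2)} \<or> {s, t} = {(1,2),(2,1)})) \<or>
          (d = 1 \<and> ({s, t} = {(1,n),(2,n-1)} \<or> {s, t} = {(1,n-1),(2,n)})))"
    then have mk: "m = 3" "k = 1" by auto
    from h consider "c = 1" "{s, t} = {(1,1),(2,2)}" | "c = 1" "{s, t} = {(1,2),(2,1)}"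
      | "d = 1" "{s, t} = {(1,n),(2,n-1)}" | "d = 1" "{s, t} = {(1,n-1),(2,n)}" by blast
    then show False
    proof cases
      case 1
      have st: "s = (1,1)" "t = (2,2)" using pair_set_order[OF 1(2) assms(11,12)] by simp_all
      have VV: "V = C_shape 3 n 1 l 1" using V_def mk 1(1) by simp
      have pr: "l \<ge> 1" "n - l - 1 \<ge> 1" using assms(4,6,7) 1(1) by simp_all
      show False using H.F7A[OF VV pr st] .
    next
      case 2
      have st: "s = (1,2)" "t = (2,1)" using pair_set_order[OF 2(2) assms(11,12)] by simp_all
      have VV: "V = C_shape 3 n 1 l 1" using V_def mk 2(1) by simp
      have pr: "l \<ge> 1" "n - l - 1 \<ge> 1" using assms(4,6,7) 2(1) by simp_all
      show False using H.F7B[OF VV pr st] .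
    next
      case 3
      have st: "s = (1,n)" "t = (2,n-1)" using pair_set_order[OF 3(2) assms(11,12)] by simp_all
      have VV: "V = C_shape 3 n 1 l c" using V_def mk by simp
      have pr: "l \<ge> 1" "c \<ge> 1" "n - l - c = 1" using assms(4,5,6) 3(1) by simp_all
      show False using H.F7C[OF VV pr st] .
    next
      case 4
      have st: "s = (1,n-1)" "t = (2,n)" using pair_set_order[OF 4(2) assms(11,12)] by simp_all
      have VV: "V = C_shape 3 n 1 l c" using V_def mk by simp
      have pr: "l \<ge> 1" "c \<ge> 1" "n - l - c = 1" using assms(4,5,6) 4(1) by simp_all
      show False using H.F7D[OF VV pr st] .
    qed
  qed
  have F8: "\<not> (n = 3 \<and> k = 1 \<and> c = 1 \<and> d = 1 \<and>
         ((m - k \<ge> 2 \<and> fst s = m - 1 \<and> fst t = m - 1 \<and> \<bar>snd s - snd t\<bar> = 2) \<or>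
          (m - k = 2 \<and> fst s = 1 \<and> fst t = 2 \<and> \<bar>snd s - snd t\<bar> = 2) \<or>
          (m - k > 2 \<and> fst s < m - 1 \<and> t = (m - 1, 2))))"
  proof
    assume h: "n = 3 \<and> k = 1 \<and> c = 1 \<and> d = 1 \<and>
         ((m - k \<ge> 2 \<and> fst s = m - 1 \<and> fst t = m - 1 \<and> \<bar>snd s - snd t\<bar> = 2) \<or>
          (m - k = 2 \<and> fst s = 1 \<and> fst t = 2 \<and> \<bar>snd s - snd t\<bar> = 2) \<or>
          (m - k > 2 \<and> fst s < m - 1 \<and> t = (m - 1, 2)))"
    then have p: "n = 3" "k = 1" "c = 1" "l = 1" using assms(6) by auto
    have VV: "V = C_shape m 3 1 1 1" using p V_def by simp
    have sy: "1 \<le> snd s" "snd s \<le> 3" "1 \<le> snd t" "snd t \<le> 3"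
      using assms(9,10) p by (auto simp: C_shape_def split: prod.splits)
    from h consider "m - 1 \<ge> 2" "fst s = m - 1" "fst t = m - 1" "\<bar>snd s - snd t\<bar> = 2"
      | "m = 3" "fst s = 1" "fst t = 2" "\<bar>snd s - snd t\<bar> = 2"
      | "m - 1 > 2" "fst s < m - 1" "t = (m - 1, 2)" by auto
    then show False
    proof cases
      case 1
      then have "(snd s = 1 \<and> snd t = 3) \<or> (snd s = 3 \<and> snd t = 1)" using sy by auto
      then have "(s = (m-1,1) \<and> t = (m-1,3)) \<or> (s = (m-1,3) \<and> t = (m-1,1))"
        using 1 by (cases s, cases t) auto
      then show False using H.F8A1[OF VV 1(1)] H.F8A2[OF VV 1(1)] by blast
    next
      case 2
      then have "(snd s = 1 \<and> snd t = 3) \<or> (snd s = 3 \<and> snd t = 1)" using sy by auto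
      then have "(s = (1,1) \<and> t = (2,3)) \<or> (s = (1,3) \<and> t = (2,1))"
        using 2 by (cases s, cases t) auto
      then show False using H.F8B1 H.F8B2 VV 2(1) by auto
    next
      case 3
      then show False using H.F8c[OF VV] by auto
    qed
  qed
  have F9: "\<not> (m - k = 1 \<and> ((snd s \<le> c \<and> snd t \<le> c) \<or> (snd s > c + l \<and> snd t > c + l)))"
  proof
    assume h: "m - k = 1 \<and> ((snd s \<le> c \<and> snd t \<le> c) \<or> (snd s > c + l \<and> snd t > c + l))"
    then have "k = m - 1" by simp
    then have VV: "V = C_shape m n (m - 1) l c" using V_def by simp
    have pr: "c \<ge> 1" "l \<ge> 1" "n - l - c \<ge> 1" "m \<ge> 2" using assms by auto
    show False using h H.F9lo[OF VV pr] H.F9hi[OF VV pr] by auto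
  qed
  show ?thesis unfolding Let_def V_def[symmetric] using F1 F3 F7 F8 F9 by blast
qed

end
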